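(* Consider problem (P) and assume it has an optimal solution $\mathbf{x}^*$ with an associated Lagrange multiplier $\mu^*>0$ for the resource constraint, and that Case 1 or Case 2 holds. Let $\mu^k\ge 0$ be arbitrary and put $\mathbf{x}^k:=\mathbf{x}(\mu^k)$. (i) If Case 1 holds and $\sum_{j\in J} g_j(x_j^k)<b$, then $x_j^*=l_j$ for all $j\in L(\mu^k)$. (ii) If Case 1 holds and $\sum_{j\in J} g_j(x_j^k)>b$, then $x_j^*=u_j$ for all $j\in U(\mu^k)$. (iii) If Case 2 holds and $\sum_{j\in J} g_j(x_j^k)<b$, then $x_j^*=u_j$ for all $j\in U(\mu^k)$. (iv) If Case 2 holds and $\sum_{j\in J} g_j(x_j^k)>b$, then $x_j^*=l_j$ for all $j\in L(\mu^k)$.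
   Context: Let $J=\{1,\dots,n\}$. For $j\in J$ let $\phi_j,g_j:\mathbb{R}\to\mathbb{R}$ be convex and continuously differentiable, with $\phi_j$ strictly convex, and let $-\infty<l_j<u_j<\infty$, $b\in\mathbb{R}$. Problem (P) is: minimize $\sum_{j\in J}\phi_j(x_j)$ subject to $\sum_{j\in J} g_j(x_j)\le b$ and $l_j\le x_j\le u_j$ for $j\in J$. A pair $(\mathbf{x}^*,\mu^* )$ is an optimal solution with Lagrange multiplier if $\mu^*\ge0$, $\sum_j g_j(x_j^* )\le b$, $\mu^*(\sum_j g_j(x_j^* )-b)=0$, $x_j^*\in[l_j,u_j]$, and for each $j$: $x_j^*=l_j$ if $\phi_j'(x_j^* )>-\mu^*g_j'(x_j^* )$, $x_j^*=u_j$ if $\phi_j'(x_j^* )<-\mu^*g_j'(x_j^* )$, and otherwise $\phi'_j(x_j^* )=-\mu^* g'_j(x_j^* )$ (i.e. $x_j^*$ minimizes $\phi_j+\mu^*g_j$ over $[l_j,u_j]$). For $\mu\ge 0$, $x_j(\mu)$ denotes the unique minimizer of $\phi_j(x_j)+\mu g_j(x_j)$ over $[l_j,u_j]$, and $\mathbf{x}(\mu)=(x_j(\mu))_{j\in J}$. Define $L(\mu):=\{j\in J: x_j(\mu)=l_j\}$ and $U(\mu):=\{j\in J: x_j(\mu)=u_j\}$. Assume $g_j'\neq0$ on $[l_j,u_j]$ and let $\mu_j(x):=-\phi_j'(x)/g_j'(x)$. Case 1: for all $j$, $g_j$ is decreasing and $\mu_j$ is strictly increasing on $[l_j,u_j]$.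 Case 2: for all $j$, $g_j$ is increasing and $\mu_j$ is strictly decreasing on $[l_j,u_j]$. *)

theory Defs
  imports "HOL-Analysis.Analysis"
begin

definition strict_convex_on :: "real set \<Rightarrow> (real \<Rightarrow> real) \<Rightarrow> bool" where
  "strict_convex_on S f \<longleftrightarrow> convex S \<and>
    (\<forall>x\<in>S. \<forall>y\<in>S. \<forall>t. x \<noteq> y \<and> 0 < t \<and> t < 1 \<longrightarrow>
       f ((1 - t) * x + t * y) < (1 - t) * f x + t * f y)"

definition xmu :: "(nat \<Rightarrow> real \<Rightarrow> real) \<Rightarrow> (nat \<Rightarrow> real \<Rightarrow> real) \<Rightarrow>
    (nat \<Rightarrow> real) \<Rightarrow> (nat \<Rightarrow> real) \<Rightarrow> real \<Rightarrow> nat \<Rightarrow> real" where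
  "xmu \<phi> g l u \<mu> j = (THE x. x \<in> {l j..u j} \<and>
      (\<forall>y\<in>{l j..u j}. \<phi> j x + \<mu> * g j x \<le> \<phi> j y + \<mu> * g j y))"

definition Lset :: "nat \<Rightarrow> (nat \<Rightarrow> real \<Rightarrow> real) \<Rightarrow> (nat \<Rightarrow> real \<Rightarrow> real) \<Rightarrow>
    (nat \<Rightarrow> real) \<Rightarrow> (nat \<Rightarrow> real) \<Rightarrow> real \<Rightarrow> nat set" where
  "Lset n \<phi> g l u \<mu> = {j \<in> {1..n}. xmu \<phi> g l u \<mu> j = l j}"

definition Uset :: "nat \<Rightarrow> (nat \<Rightarrow> real \<Rightarrow> real) \<Rightarrow> (nat \<Rightarrow> real \<Rightarrow> real) \<Rightarrow>
    (nat \<Rightarrow> real) \<Rightarrow> (nat \<Rightarrow> real) \<Rightarrow> real \<Rightarrow> nat set" where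
  "Uset n \<phi> g l u \<mu> = {j \<in> {1..n}. xmu \<phi> g l u \<mu> j = u j}"

text \<open>(x*, mu*) is an optimal solution of (P) with Lagrange multiplier mu*;
  d\<phi>, dg are the derivatives of \<phi>, g.\<close>
definition opt_lagrange :: "nat \<Rightarrow> (nat \<Rightarrow> real \<Rightarrow> real) \<Rightarrow> (nat \<Rightarrow> real \<Rightarrow> real) \<Rightarrow>
    (nat \<Rightarrow> real \<Rightarrow> real) \<Rightarrow>
    (nat \<Rightarrow> real) \<Rightarrow> (nat \<Rightarrow> real) \<Rightarrow> real \<Rightarrow> (nat \<Rightarrow> real) \<Rightarrow> real \<Rightarrow> bool" where
  "opt_lagrange n d\<phi> g dg l u b xs \<mu>s \<longleftrightarrow>
     \<mu>s \<ge> 0 \<and> (\<Sum>j\<in>{1..n}. g j (xs j)) \<le> b \<and>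
     \<mu>s * ((\<Sum>j\<in>{1..n}. g j (xs j)) - b) = 0 \<and>
     (\<forall>j\<in>{1..n}. xs j \<in> {l j..u j} \<and>
        (d\<phi> j (xs j) > - \<mu>s * dg j (xs j) \<longrightarrow> xs j = l j) \<and>
        (d\<phi> j (xs j) < - \<mu>s * dg j (xs j) \<longrightarrow> xs j = u j) \<and>
        (\<not> d\<phi> j (xs j) > - \<mu>s * dg j (xs j) \<and> \<not> d\<phi> j (xs j) < - \<mu>s * dg j (xs j)
            \<longrightarrow> d\<phi> j (xs j) = - \<mu>s * dg j (xs j)))"

definition case1 :: "nat \<Rightarrow> (nat \<Rightarrow> real \<Rightarrow> real) \<Rightarrow> (nat \<Rightarrow> real \<Rightarrow> real) \<Rightarrow>
    (nat \<Rightarrow> real \<Rightarrow> real) \<Rightarrow> (nat \<Rightarrow> real) \<Rightarrow> (nat \<Rightarrow> real) \<Rightarrow> bool" where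
  "case1 n d\<phi> g dg l u \<longleftrightarrow> (\<forall>j\<in>{1..n}.
     antimono_on {l j..u j} (g j) \<and>
     strict_mono_on {l j..u j} (\<lambda>x. - d\<phi> j x / dg j x))"

definition case2 :: "nat \<Rightarrow> (nat \<Rightarrow> real \<Rightarrow> real) \<Rightarrow> (nat \<Rightarrow> real \<Rightarrow> real) \<Rightarrow>
    (nat \<Rightarrow> real \<Rightarrow> real) \<Rightarrow> (nat \<Rightarrow> real) \<Rightarrow> (nat \<Rightarrow> real) \<Rightarrow> bool" where
  "case2 n d\<phi> g dg l u \<longleftrightarrow> (\<forall>j\<in>{1..n}.
     mono_on {l j..u j} (g j) \<and>
     strict_antimono_on {l j..u j} (\<lambda>x. - d\<phi> j x / dg j x))"

end

theory Submission
  imports Defs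
begin

definition kkt :: "(real \<Rightarrow> real) \<Rightarrow> (real \<Rightarrow> real) \<Rightarrow> real \<Rightarrow> real \<Rightarrow> real \<Rightarrow> real \<Rightarrow> bool" where
  "kkt dp dq l u \<mu> x \<longleftrightarrow> x \<in> {l..u} \<and> (l < x \<longrightarrow> dp x + \<mu> * dq x \<le> 0) \<and> (x < u \<longrightarrow> 0 \<le> dp x + \<mu> * dq x)"

lemma kkt_mono1:
  fixes dp dq :: "real \<Rightarrow> real"
  assumes neg: "\<forall>x\<in>{l..u}. dq x < 0" and sm: "strict_mono_on {l..u} (\<lambda>x. - dp x / dq x)"
    and mn: "\<mu> \<le> \<nu>" and kx: "kkt dp dq l u \<mu> x" and ky: "kkt dp dq l u \<nu> y"
  shows "x \<le> y"
proof (rule ccontr)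
  assume "\<not> x \<le> y" hence yx: "y < x" by simp
  have xi: "x \<in> {l..u}" and yi: "y \<in> {l..u}" using kx ky by (auto simp: kkt_def)
  have lx: "l < x" "y < u" using yx xi yi by auto
  have h1: "dp x + \<mu> * dq x \<le> 0" using kx lx by (auto simp: kkt_def)
  have h2: "0 \<le> dp y + \<nu> * dq y" using ky lx by (auto simp: kkt_def)
  have d: "dq x < 0" using neg xi by auto
  have a0: "(- dp x) / dq x \<le> \<mu>" by (subst neg_divide_le_eq[OF d]) (use h1 in linarith)
  have a: "- dp x / dq x \<le> \<mu>" using a0 by simp
  have e: "dq y < 0" using neg yi by auto
  have b0: "\<nu> \<le> (- dp y) / dq y" by (subst neg_le_divide_eq[OF e]) (use h2 in linarith)
  have b: "\<nu> \<le> - dp y / dq y" using b0 by simp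
  have "- dp y / dq y < - dp x / dq x" using strict_mono_onD[OF sm yi xi yx] .
  thus False using a b mn by linarith
qed

lemma kkt_mono2:
  fixes dp dq :: "real \<Rightarrow> real"
  assumes pos: "\<forall>x\<in>{l..u}. dq x > 0" and sm: "strict_antimono_on {l..u} (\<lambda>x. - dp x / dq x)"
    and mn: "\<mu> \<le> \<nu>" and kx: "kkt dp dq l u \<mu> x" and ky: "kkt dp dq l u \<nu> y"
  shows "y \<le> x"
proof (rule ccontr)
  assume "\<not> y \<le> x" hence yx: "x < y" by simp
  have xi: "x \<in> {l..u}" and yi: "y \<in> {l..u}" using kx ky by (auto simp: kkt_def)
  have lx: "x < u" "l < y" using yx xi yi by auto
  have h1: "0 \<le> dp x + \<mu> * dq x" using kx lx by (auto simp: kkt_def)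
  have h2: "dp y + \<nu> * dq y \<le> 0" using ky lx by (auto simp: kkt_def)
  have d: "dq x > 0" using pos xi by auto
  have a0: "(- dp x) / dq x \<le> \<mu>" by (subst pos_divide_le_eq[OF d]) (use h1 in linarith)
  have a: "- dp x / dq x \<le> \<mu>" using a0 by simp
  have e: "dq y > 0" using pos yi by auto
  have b0: "\<nu> \<le> (- dp y) / dq y" by (subst pos_le_divide_eq[OF e]) (use h2 in linarith)
  have b: "\<nu> \<le> - dp y / dq y" using b0 by simp
  have "- dp y / dq y < - dp x / dq x" using monotone_onD[OF sm xi yi yx] by simp
  thus False using a b mn by linarith
qed

lemma min_kkt:
  fixes f :: "real \<Rightarrow> real"
  assumes der: "(f has_real_derivative f') (at x)" and xi: "x \<in> {l..u}"
    and mn: "\<forall>y\<in>{l..u}. f x \<le> f y"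
  shows "(l < x \<longrightarrow> f' \<le> 0) \<and> (x < u \<longrightarrow> 0 \<le> f')"
proof safe
  assume lx: "l < x"
  show "f' \<le> 0"
  proof (rule ccontr)
    assume "\<not> f' \<le> 0"
    then obtain d where d: "d > 0" "\<forall>h>0. h < d \<longrightarrow> f (x - h) < f x"
      using DERIV_pos_inc_left[OF der] by force
    define h where "h = min (d/2) (x - l)"
    have "f (x - h) < f x" using d lx by (simp add: h_def)
    moreover have "x - h \<in> {l..u}" using xi lx d by (auto simp: h_def)
    ultimately show False using mn by fastforce
  qed
next
  assume lx: "x < u"
  show "0 \<le> f'"
  proof (rule ccontr)
    assume "\<not> 0 \<le> f'"
    then obtain d where d: "d > 0" "\<forall>h>0. h < d \<longrightarrow> f (x + h) < f x"
      using DERIV_neg_dec_right[OF der] by force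
    define h where "h = min (d/2) (u - x)"
    have "f (x + h) < f x" using d lx by (simp add: h_def)
    moreover have "x + h \<in> {l..u}" using xi lx d by (auto simp: h_def)
    ultimately show False using mn by fastforce
  qed
qed

lemma sign_anti:
  fixes q dq :: "real \<Rightarrow> real"
  assumes der: "\<And>x. (q has_real_derivative dq x) (at x)" and lu: "l < u"
    and am: "antimono_on {l..u} q" and nz: "\<forall>x\<in>{l..u}. dq x \<noteq> 0"
  shows "\<forall>x\<in>{l..u}. dq x < 0"
proof (rule ballI, rule ccontr)
  fix x assume xi: "x \<in> {l..u}" and "\<not> dq x < 0"
  hence p: "dq x > 0" using nz xi by force
  show False
  proof (cases "x < u")
    case True
    then obtain d where d: "d > 0" "\<forall>h>0. h < d \<longrightarrow> q x < q (x + h)"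
      using DERIV_pos_inc_right[OF der p] by force
    define h where "h = min (d/2) (u - x)"
    have "q x < q (x + h)" using d True by (simp add: h_def)
    moreover have "x + h \<in> {l..u}" using xi True d by (auto simp: h_def)
    moreover have "x \<le> x + h" using True d by (simp add: h_def)
    ultimately show False using monotone_onD[OF am xi] by fastforce
  next
    case False
    hence lx: "l < x" using xi lu by auto
    then obtain d where d: "d > 0" "\<forall>h>0. h < d \<longrightarrow> q (x - h) < q x"
      using DERIV_pos_inc_left[OF der p] by force
    define h where "h = min (d/2) (x - l)"
    have "q (x - h) < q x" using d lx by (simp add: h_def)
    moreover have "x - h \<in> {l..u}" using xi lx d by (auto simp: h_def)
    moreover have "x - h \<le> x" using lx d by (simp add: h_def)
    ultimately show False using monotone_onD[OF am _ xi] by fastforce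
  qed
qed

lemma sign_mono:
  fixes q dq :: "real \<Rightarrow> real"
  assumes der: "\<And>x. (q has_real_derivative dq x) (at x)" and lu: "l < u"
    and am: "mono_on {l..u} q" and nz: "\<forall>x\<in>{l..u}. dq x \<noteq> 0"
  shows "\<forall>x\<in>{l..u}. dq x > 0"
proof -
  have der': "\<And>x. ((\<lambda>x. - q x) has_real_derivative - dq x) (at x)"
    using der by (auto intro: derivative_eq_intros)
  have "antimono_on {l..u} (\<lambda>x. - q x)"
    using am by (auto simp: monotone_on_def)
  from sign_anti[OF der' lu this] nz show ?thesis by auto
qed

lemma xmu_kkt:
  fixes p q dp dq :: "real \<Rightarrow> real"
  assumes dp: "\<And>x. (p has_real_derivative dp x) (at x)"
    and dq: "\<And>x. (q has_real_derivative dq x) (at x)"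
    and lu: "l < u"
    and uniq: "\<And>x y. kkt dp dq l u \<mu> x \<Longrightarrow> kkt dp dq l u \<mu> y \<Longrightarrow> x = y"
  shows "kkt dp dq l u \<mu> (THE x. x \<in> {l..u} \<and> (\<forall>y\<in>{l..u}. p x + \<mu> * q x \<le> p y + \<mu> * q y))"
proof -
  let ?h = "\<lambda>x. p x + \<mu> * q x"
  have dh: "\<And>x. (?h has_real_derivative dp x + \<mu> * dq x) (at x)"
    using dp dq by (auto intro!: derivative_eq_intros)
  have "continuous_on {l..u} ?h"
    using dh by (meson DERIV_isCont continuous_at_imp_continuous_on)
  then obtain x where x: "x \<in> {l..u}" "\<forall>y\<in>{l..u}. ?h x \<le> ?h y"
    using continuous_attains_inf[of "{l..u}" ?h] lu by auto
  have kx: "kkt dp dq l u \<mu> x" if "x \<in> {l..u}" "\<forall>y\<in>{l..u}. ?h x \<le> ?h y" for x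
    using min_kkt[OF dh that] that by (simp add: kkt_def)
  have "(THE x. x \<in> {l..u} \<and> (\<forall>y\<in>{l..u}. ?h x \<le> ?h y)) = x"
    using x kx uniq by (intro the_equality) auto
  thus ?thesis using kx x by simp
qed

theorem proposition1:
  fixes n :: nat and \<phi> d\<phi> g dg :: "nat \<Rightarrow> real \<Rightarrow> real"
    and l u :: "nat \<Rightarrow> real" and b :: real
    and xs :: "nat \<Rightarrow> real" and \<mu>s \<mu>k :: real
  assumes phi_deriv: "\<And>j x. j \<in> {1..n} \<Longrightarrow> (\<phi> j has_real_derivative d\<phi> j x) (at x)"
    and g_deriv: "\<And>j x. j \<in> {1..n} \<Longrightarrow> (g j has_real_derivative dg j x) (at x)"
    and dphi_cont: "\<And>j. j \<in> {1..n} \<Longrightarrow> continuous_on UNIV (d\<phi> j)"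
    and dg_cont: "\<And>j. j \<in> {1..n} \<Longrightarrow> continuous_on UNIV (dg j)"
    and phi_sconv: "\<And>j. j \<in> {1..n} \<Longrightarrow> strict_convex_on UNIV (\<phi> j)"
    and g_conv: "\<And>j. j \<in> {1..n} \<Longrightarrow> convex_on UNIV (g j)"
    and lu: "\<And>j. j \<in> {1..n} \<Longrightarrow> l j < u j"
    and dg_nz: "\<And>j x. j \<in> {1..n} \<Longrightarrow> x \<in> {l j..u j} \<Longrightarrow> dg j x \<noteq> 0"
    and opt: "opt_lagrange n d\<phi> g dg l u b xs \<mu>s"
    and mus_pos: "\<mu>s > 0"
    and cases: "case1 n d\<phi> g dg l u \<or> case2 n d\<phi> g dg l u"
    and muk: "\<mu>k \<ge> 0"
  shows
   "(case1 n d\<phi> g dg l u \<and> (\<Sum>j\<in>{1..n}. g j (xmu \<phi> g l u \<mu>k j)) < b \<longrightarrow>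
       (\<forall>j\<in>Lset n \<phi> g l u \<mu>k. xs j = l j)) \<and>
    (case1 n d\<phi> g dg l u \<and> (\<Sum>j\<in>{1..n}. g j (xmu \<phi> g l u \<mu>k j)) > b \<longrightarrow>
       (\<forall>j\<in>Uset n \<phi> g l u \<mu>k. xs j = u j)) \<and>
    (case2 n d\<phi> g dg l u \<and> (\<Sum>j\<in>{1..n}. g j (xmu \<phi> g l u \<mu>k j)) < b \<longrightarrow>
       (\<forall>j\<in>Uset n \<phi> g l u \<mu>k. xs j = u j)) \<and>
    (case2 n d\<phi> g dg l u \<and> (\<Sum>j\<in>{1..n}. g j (xmu \<phi> g l u \<mu>k j)) > b \<longrightarrow>
       (\<forall>j\<in>Lset n \<phi> g l u \<mu>k. xs j = l j))"
proof -
  let ?J = "{1..n::nat}"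
  let ?xk = "\<lambda>j. xmu \<phi> g l u \<mu>k j"
  have xs_kkt: "kkt (d\<phi> j) (dg j) (l j) (u j) \<mu>s (xs j)" if j: "j \<in> ?J" for j
  proof -
    have o: "xs j \<in> {l j..u j}"
      "d\<phi> j (xs j) > - \<mu>s * dg j (xs j) \<longrightarrow> xs j = l j"
      "d\<phi> j (xs j) < - \<mu>s * dg j (xs j) \<longrightarrow> xs j = u j"
      using opt j unfolding opt_lagrange_def by auto
    show ?thesis unfolding kkt_def
    proof (intro conjI impI)
      show "xs j \<in> {l j..u j}" by fact
    next
      assume "l j < xs j" thus "d\<phi> j (xs j) + \<mu>s * dg j (xs j) \<le> 0" using o(2) by fastforce
    next
      assume "xs j < u j" thus "0 \<le> d\<phi> j (xs j) + \<mu>s * dg j (xs j)" using o(3) by fastforce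
    qed
  qed
  have sumb: "(\<Sum>j\<in>?J. g j (xs j)) = b"
    using opt mus_pos unfolding opt_lagrange_def by auto
  have c1: "(\<forall>x\<in>{l j..u j}. dg j x < 0) \<and> strict_mono_on {l j..u j} (\<lambda>x. - d\<phi> j x / dg j x)
      \<and> antimono_on {l j..u j} (g j)"
    if c: "case1 n d\<phi> g dg l u" and j: "j \<in> ?J" for j
  proof -
    have a: "antimono_on {l j..u j} (g j)" "strict_mono_on {l j..u j} (\<lambda>x. - d\<phi> j x / dg j x)"
      using c j unfolding case1_def by auto
    have "\<forall>x\<in>{l j..u j}. dg j x < 0"
      by (rule sign_anti[OF g_deriv[OF j] lu[OF j] a(1)]) (use dg_nz j in auto)
    thus ?thesis using a by auto
  qed
  have c2: "(\<forall>x\<in>{l j..u j}. dg j x > 0) \<and> strict_antimono_on {l j..u j} (\<lambda>x. - d\<phi> j x / dg j x)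
      \<and> mono_on {l j..u j} (g j)"
    if c: "case2 n d\<phi> g dg l u" and j: "j \<in> ?J" for j
  proof -
    have a: "mono_on {l j..u j} (g j)" "strict_antimono_on {l j..u j} (\<lambda>x. - d\<phi> j x / dg j x)"
      using c j unfolding case2_def by auto
    have "\<forall>x\<in>{l j..u j}. dg j x > 0"
      by (rule sign_mono[OF g_deriv[OF j] lu[OF j] a(1)]) (use dg_nz j in auto)
    thus ?thesis using a by auto
  qed
  have xk_kkt: "kkt (d\<phi> j) (dg j) (l j) (u j) \<mu>k (?xk j)" if j: "j \<in> ?J" for j
    unfolding xmu_def
  proof (rule xmu_kkt[OF phi_deriv[OF j] g_deriv[OF j] lu[OF j]])
    fix x y assume kx: "kkt (d\<phi> j) (dg j) (l j) (u j) \<mu>k x" and ky: "kkt (d\<phi> j) (dg j) (l j) (u j) \<mu>k y"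
    show "x = y"
    proof (cases "case1 n d\<phi> g dg l u")
      case True
      from c1[OF True j] kkt_mono1[of "l j" "u j" "dg j" "d\<phi> j" \<mu>k \<mu>k] kx ky
      show ?thesis by (meson order_antisym order_refl)
    next
      case False
      hence "case2 n d\<phi> g dg l u" using cases by auto
      from c2[OF this j] kkt_mono2[of "l j" "u j" "dg j" "d\<phi> j" \<mu>k \<mu>k] kx ky
      show ?thesis by (meson order_antisym order_refl)
    qed
  qed
  have inI: "?xk j \<in> {l j..u j}" "xs j \<in> {l j..u j}" if "j \<in> ?J" for j
    using xk_kkt[OF that] xs_kkt[OF that] by (auto simp: kkt_def)
  show ?thesis
  proof (intro conjI impI)
    assume h: "case1 n d\<phi> g dg l u \<and> (\<Sum>j\<in>?J. g j (?xk j)) < b"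
    have lt: "\<mu>s < \<mu>k"
    proof (rule ccontr)
      assume "\<not> \<mu>s < \<mu>k" hence le: "\<mu>k \<le> \<mu>s" by simp
      have "g j (xs j) \<le> g j (?xk j)" if j: "j \<in> ?J" for j
      proof -
        have "?xk j \<le> xs j" using kkt_mono1[OF _ _ le xk_kkt[OF j] xs_kkt[OF j]] c1[OF _ j] h by blast
        thus ?thesis using monotone_onD[of _ "(\<le>)" "\<lambda>x y. y \<le> x"] c1[OF _ j] h inI[OF j] by blast
      qed
      hence "(\<Sum>j\<in>?J. g j (xs j)) \<le> (\<Sum>j\<in>?J. g j (?xk j))" by (rule sum_mono)
      thus False using h sumb by linarith
    qed
    show "\<forall>j\<in>Lset n \<phi> g l u \<mu>k. xs j = l j"
    proof
      fix j assume "j \<in> Lset n \<phi> g l u \<mu>k"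
      hence j: "j \<in> ?J" and e: "?xk j = l j" by (auto simp: Lset_def)
      have "xs j \<le> ?xk j" using kkt_mono1[OF _ _ less_imp_le[OF lt] xs_kkt[OF j] xk_kkt[OF j]] c1[OF _ j] h by blast
      thus "xs j = l j" using e inI[OF j] by auto
    qed
  next
    assume h: "case1 n d\<phi> g dg l u \<and> (\<Sum>j\<in>?J. g j (?xk j)) > b"
    have lt: "\<mu>k < \<mu>s"
    proof (rule ccontr)
      assume "\<not> \<mu>k < \<mu>s" hence le: "\<mu>s \<le> \<mu>k" by simp
      have "g j (?xk j) \<le> g j (xs j)" if j: "j \<in> ?J" for j
      proof -
        have "xs j \<le> ?xk j" using kkt_mono1[OF _ _ le xs_kkt[OF j] xk_kkt[OF j]] c1[OF _ j] h by blast
        thus ?thesis using monotone_onD[of _ "(\<le>)" "\<lambda>x y. y \<le> x"] c1[OF _ j] h inI[OF j] by blast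
      qed
      hence "(\<Sum>j\<in>?J. g j (?xk j)) \<le> (\<Sum>j\<in>?J. g j (xs j))" by (rule sum_mono)
      thus False using h sumb by linarith
    qed
    show "\<forall>j\<in>Uset n \<phi> g l u \<mu>k. xs j = u j"
    proof
      fix j assume "j \<in> Uset n \<phi> g l u \<mu>k"
      hence j: "j \<in> ?J" and e: "?xk j = u j" by (auto simp: Uset_def)
      have "?xk j \<le> xs j" using kkt_mono1[OF _ _ less_imp_le[OF lt] xk_kkt[OF j] xs_kkt[OF j]] c1[OF _ j] h by blast
      thus "xs j = u j" using e inI[OF j] by auto
    qed
  next
    assume h: "case2 n d\<phi> g dg l u \<and> (\<Sum>j\<in>?J. g j (?xk j)) < b"
    have lt: "\<mu>s < \<mu>k"
    proof (rule ccontr)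
      assume "\<not> \<mu>s < \<mu>k" hence le: "\<mu>k \<le> \<mu>s" by simp
      have "g j (xs j) \<le> g j (?xk j)" if j: "j \<in> ?J" for j
      proof -
        have "xs j \<le> ?xk j" using kkt_mono2[OF _ _ le xk_kkt[OF j] xs_kkt[OF j]] c2[OF _ j] h by blast
        thus ?thesis using monotone_onD[of _ "(\<le>)" "(\<le>)"] c2[OF _ j] h inI[OF j] by blast
      qed
      hence "(\<Sum>j\<in>?J. g j (xs j)) \<le> (\<Sum>j\<in>?J. g j (?xk j))" by (rule sum_mono)
      thus False using h sumb by linarith
    qed
    show "\<forall>j\<in>Uset n \<phi> g l u \<mu>k. xs j = u j"
    proof
      fix j assume "j \<in> Uset n \<phi> g l u \<mu>k"
      hence j: "j \<in> ?J" and e: "?xk j = u j" by (auto simp: Uset_def)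
      have "?xk j \<le> xs j" using kkt_mono2[OF _ _ less_imp_le[OF lt] xs_kkt[OF j] xk_kkt[OF j]] c2[OF _ j] h by blast
      thus "xs j = u j" using e inI[OF j] by auto
    qed
  next
    assume h: "case2 n d\<phi> g dg l u \<and> (\<Sum>j\<in>?J. g j (?xk j)) > b"
    have lt: "\<mu>k < \<mu>s"
    proof (rule ccontr)
      assume "\<not> \<mu>k < \<mu>s" hence le: "\<mu>s \<le> \<mu>k" by simp
      have "g j (?xk j) \<le> g j (xs j)" if j: "j \<in> ?J" for j
      proof -
        have "?xk j \<le> xs j" using kkt_mono2[OF _ _ le xs_kkt[OF j] xk_kkt[OF j]] c2[OF _ j] h by blast
        thus ?thesis using monotone_onD[of _ "(\<le>)" "(\<le>)"] c2[OF _ j] h inI[OF j] by blast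
      qed
      hence "(\<Sum>j\<in>?J. g j (?xk j)) \<le> (\<Sum>j\<in>?J. g j (xs j))" by (rule sum_mono)
      thus False using h sumb by linarith
    qed
    show "\<forall>j\<in>Lset n \<phi> g l u \<mu>k. xs j = l j"
    proof
      fix j assume "j \<in> Lset n \<phi> g l u \<mu>k"
      hence j: "j \<in> ?J" and e: "?xk j = l j" by (auto simp: Lset_def)
      have "xs j \<le> ?xk j" using kkt_mono2[OF _ _ less_imp_le[OF lt] xk_kkt[OF j] xs_kkt[OF j]] c2[OF _ j] h by blast
      thus "xs j = l j" using e inI[OF j] by auto
    qed
  qed
qed

end
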